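(* Let $a_0<a_1<\dots<a_n$ be positive integers with $\gcd(a_0,\dots,a_n)=1$ and let $t\in\mathbb{Z}_{\ge0}$. If the equation $a_0x_0+a_1x_1+\dots+a_nx_n=t$ has a solution $x\in\mathbb{Z}_{\ge 0}^{n+1}$, then it has a solution $x\in\mathbb{Z}_{\ge0}^{n+1}$ with $$\prod_{i=1}^n (x_i+1)\le a_0 .$$ *)

theory Defs
  imports Main
begin

end

theory Submission
  imports Defs "HOL-Library.FuncSet"
begin

lemma base_inj0:
  fixes u v :: "nat \<Rightarrow> nat" and B :: nat
  assumes "0 < B" "\<forall>i<m. u i < B" "\<forall>i<m. v i < B"
    "(\<Sum>i<m. u i * B^i) = (\<Sum>i<m. v i * B^i)" "i < m"
  shows "u i = v i"
  using assms
proof (induction m arbitrary: u v i)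
  case 0
  then show ?case by simp
next
  case (Suc m)
  have s: "\<And>w. (\<Sum>i<Suc m. w i * B^i) = w 0 + B * (\<Sum>i<m. w (Suc i) * B^i)"
    unfolding sum.lessThan_Suc_shift sum_distrib_left by (simp add: ac_simps)
  have e: "u 0 + B * (\<Sum>i<m. u (Suc i) * B^i) = v 0 + B * (\<Sum>i<m. v (Suc i) * B^i)"
    using Suc.prems(4) s by metis
  have u0: "u 0 < B" "v 0 < B" using Suc.prems by auto
  have "(u 0 + B * (\<Sum>i<m. u (Suc i) * B^i)) mod B = u 0" using u0 by simp
  moreover have "(v 0 + B * (\<Sum>i<m. v (Suc i) * B^i)) mod B = v 0" using u0 by simp
  ultimately have h0: "u 0 = v 0" using e by metis
  with e have "(\<Sum>i<m. u (Suc i) * B^i) = (\<Sum>i<m. v (Suc i) * B^i)" using \<open>0 < B\<close> by simp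
  moreover have "\<forall>i<m. u (Suc i) < B" "\<forall>i<m. v (Suc i) < B" using Suc.prems(2,3) by auto
  ultimately have ih: "\<And>j. j < m \<Longrightarrow> u (Suc j) = v (Suc j)"
    using Suc.IH[of "\<lambda>i. u (Suc i)" "\<lambda>i. v (Suc i)"] Suc.prems(1) by blast
  show ?case
  proof (cases i)
    case 0 then show ?thesis using h0 by simp
  next
    case (Suc j) then show ?thesis using ih Suc.prems(5) by simp
  qed
qed


lemma sh: "(\<Sum>i=1..n. w i * (B::nat)^i) = B * (\<Sum>i<n. w (Suc i) * B^i)"
proof -
  have "(\<Sum>i=1..n. w i * B^i) = (\<Sum>i<n. w (Suc i) * B^(Suc i))"
    unfolding One_nat_def by (rule sum.atLeast1_atMost_eq)
  also have "\<dots> = B * (\<Sum>i<n. w (Suc i) * B^i)"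
    by (simp add: sum_distrib_left ac_simps)
  finally show ?thesis .
qed
lemma "y \<le> (z::nat) \<Longrightarrow> z - y + y' + y = z + y'" by simp


lemma base_inj:
  fixes u v :: "nat \<Rightarrow> nat" and B :: nat
  assumes "0 < B" "\<forall>i\<in>{1..n}. u i < B" "\<forall>i\<in>{1..n}. v i < B"
    "(\<Sum>i=1..n. u i * B^i) = (\<Sum>i=1..n. v i * B^i)" "i \<in> {1..n}"
  shows "u i = v i"
proof -
  have "B * (\<Sum>i<n. u (Suc i) * B^i) = B * (\<Sum>i<n. v (Suc i) * B^i)"
    using assms(4) unfolding sh .
  then have "(\<Sum>i<n. u (Suc i) * B^i) = (\<Sum>i<n. v (Suc i) * B^i)"
    using assms(1) by simp
  moreover obtain j where j: "i = Suc j" "j < n"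
  proof -
    have "i \<noteq> 0" "i \<le> n" using assms(5) by auto
    then obtain j where "i = Suc j" using not0_implies_Suc by blast
    then show ?thesis using that \<open>i \<le> n\<close> by simp
  qed
  moreover have "\<forall>i<n. u (Suc i) < B" "\<forall>i<n. v (Suc i) < B" using assms(2,3) by auto
  ultimately show ?thesis
    using base_inj0[of B n "\<lambda>i. u (Suc i)" "\<lambda>i. v (Suc i)" j] assms(1) by blast
qed

lemma swap_eq:
  fixes a z y y' :: "nat \<Rightarrow> nat" and B :: nat
  assumes "\<forall>i\<in>{1..n}. y i \<le> z i"
  shows "(\<Sum>i=1..n. a i * (z i - y i + y' i)) + (\<Sum>i=1..n. a i * y i)
       = (\<Sum>i=1..n. a i * z i) + (\<Sum>i=1..n. a i * y' i)"
    and "(\<Sum>i=1..n. (z i - y i + y' i) * B^i) + (\<Sum>i=1..n. y i * B^i)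
       = (\<Sum>i=1..n. z i * B^i) + (\<Sum>i=1..n. y' i * B^i)"
proof -
  have p1: "a i * (z i - y i + y' i) + a i * y i = a i * z i + a i * y' i" if "i \<in> {1..n}" for i
  proof -
    have "y i \<le> z i" using assms that by auto
    then have "z i - y i + y' i + y i = z i + y' i" by simp
    then show ?thesis by (metis distrib_left)
  qed
  have p2: "(z i - y i + y' i) * B^i + y i * B^i = z i * B^i + y' i * B^i" if "i \<in> {1..n}" for i
  proof -
    have "y i \<le> z i" using assms that by auto
    then have "z i - y i + y' i + y i = z i + y' i" by simp
    then show ?thesis by (metis distrib_right)
  qed
  show "(\<Sum>i=1..n. a i * (z i - y i + y' i)) + (\<Sum>i=1..n. a i * y i)
       = (\<Sum>i=1..n. a i * z i) + (\<Sum>i=1..n. a i * y' i)"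
    using sum.cong[OF refl p1, of "{1..n}"] by (simp add: sum.distrib)
  show "(\<Sum>i=1..n. (z i - y i + y' i) * B^i) + (\<Sum>i=1..n. y i * B^i)
       = (\<Sum>i=1..n. z i * B^i) + (\<Sum>i=1..n. y' i * B^i)"
    using sum.cong[OF refl p2, of "{1..n}"] by (simp add: sum.distrib)
qed



lemma step:
  fixes a z :: "nat \<Rightarrow> nat" and n t :: nat
  assumes pos: "0 < a 0" and bnd: "\<forall>i\<in>{1..n}. z i \<le> t"
  and big: "a 0 < (\<Prod>i=1..n. z i + 1)"
  shows "\<exists>z'. (\<exists>k>0. (\<Sum>i=1..n. a i * z' i) + a 0 * k = (\<Sum>i=1..n. a i * z i))
      \<or> ((\<Sum>i=1..n. a i * z' i) = (\<Sum>i=1..n. a i * z i)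
          \<and> (\<Sum>i=1..n. z' i * Suc t ^ i) < (\<Sum>i=1..n. z i * Suc t ^ i))"
proof -
  define box where "box = PiE {1..n} (\<lambda>i. {0..z i})"
  define S where "S y = (\<Sum>i=1..n. a i * y i)" for y
  define C where "C y = (\<Sum>i=1..n. y i * Suc t ^ i)" for y
  have cb: "card box = (\<Prod>i=1..n. z i + 1)" unfolding box_def by (simp add: card_PiE)
  have "\<not> inj_on (\<lambda>y. S y mod a 0) box"
  proof
    assume inj: "inj_on (\<lambda>y. S y mod a 0) box"
    have "(\<lambda>y. S y mod a 0) ` box \<subseteq> {..<a 0}" using pos by auto
    then have "card box \<le> card {..<a 0}" using card_inj_on_le[OF inj _ finite_lessThan] by blast
    with cb big show False by simp
  qed
  then obtain y y' where yy: "y \<in> box" "y' \<in> box" "y \<noteq> y'" "S y mod a 0 = S y' mod a 0"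
    unfolding inj_on_def by blast
  have le: "\<forall>i\<in>{1..n}. y i \<le> z i" "\<forall>i\<in>{1..n}. y' i \<le> z i"
    using yy(1,2) unfolding box_def by (auto simp: PiE_iff)
  have diff: "\<exists>i\<in>{1..n}. y i \<noteq> y' i" using yy(1-3) PiE_ext unfolding box_def by metis
  have Cne: "C y \<noteq> C y'"
  proof
    assume "C y = C y'"
    moreover have "\<forall>i\<in>{1..n}. y i < Suc t" "\<forall>i\<in>{1..n}. y' i < Suc t"
      using le bnd by (auto simp: less_Suc_eq_le intro: order_trans)
    ultimately have "\<forall>i\<in>{1..n}. y i = y' i"
      using base_inj[of "Suc t" n y y'] unfolding C_def by blast
    with diff show False by blast
  qed
  define zm where "zm = (\<lambda>i. z i - y i + y' i)"
  define zp where "zp = (\<lambda>i. z i - y' i + y i)"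
  have em: "S zm + S y = S z + S y'" "C zm + C y = C z + C y'"
    using swap_eq(1)[OF le(1), where a=a and y'=y'] swap_eq(2)[OF le(1), where B="Suc t" and y'=y'] unfolding zm_def S_def C_def by simp_all
  have ep: "S zp + S y' = S z + S y" "C zp + C y' = C z + C y"
    using swap_eq(1)[OF le(2), where a=a and y'=y] swap_eq(2)[OF le(2), where B="Suc t" and y'=y] unfolding zp_def S_def C_def by simp_all
  consider "S y' < S y" | "S y < S y'" | "S y = S y'" by linarith
  then show ?thesis
  proof cases
    case 1
    then have "a 0 dvd S y - S y'" using yy(4) mod_eq_dvd_iff_nat[of "S y'" "S y" "a 0"] by simp
    then obtain k where k: "S y - S y' = a 0 * k" by blast
    then have "k > 0" using 1 by (metis diff_is_0_eq gr0I leD mult_0_right)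
    moreover have "S zm + a 0 * k = S z" using em(1) k 1 by linarith
    ultimately show ?thesis unfolding S_def C_def by blast
  next
    case 2
    then have "a 0 dvd S y' - S y" using yy(4) mod_eq_dvd_iff_nat[of "S y" "S y'" "a 0"] by simp
    then obtain k where k: "S y' - S y = a 0 * k" by blast
    then have "k > 0" using 2 by (metis diff_is_0_eq gr0I leD mult_0_right)
    moreover have "S zp + a 0 * k = S z" using ep(1) k 2 by linarith
    ultimately show ?thesis unfolding S_def C_def by blast
  next
    case 3
    then have s: "S zm = S z" "S zp = S z" using em(1) ep(1) by simp_all
    show ?thesis
    proof (cases "C y' < C y")
      case True
      then have "C zm < C z" using em(2) by linarith
      then show ?thesis using s unfolding S_def C_def by blast
    next
      case False
      then have "C y < C y'" using Cne by linarith
      then have "C zp < C z" using ep(2) by linarith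
      then show ?thesis using s unfolding S_def C_def by blast
    qed
  qed
qed



lemma split0:
  fixes n :: nat and a x :: "nat \<Rightarrow> nat"
  shows "(\<Sum>i=0..n. a i * x i) = a 0 * x 0 + (\<Sum>i=1..n. a i * (x i::nat))"
  using sum.atLeast_Suc_atMost[of 0 n "\<lambda>i. a i * x i"] by simp

theorem lemma1:
  fixes a :: "nat \<Rightarrow> nat" and n :: nat and t :: nat
  assumes pos: "0 < a 0"
    and incr: "\<And>i. i < n \<Longrightarrow> a i < a (Suc i)"
    and gcd1: "Gcd (a ` {0..n}) = 1"
    and sol: "\<exists>x :: nat \<Rightarrow> nat. (\<Sum>i=0..n. a i * x i) = t"
  shows "\<exists>x :: nat \<Rightarrow> nat. (\<Sum>i=0..n. a i * x i) = t \<and> (\<Prod>i=1..n. x i + 1) \<le> a 0"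
proof -
  define R where "R z = (\<Sum>i=1..n. a i * z i)" for z :: "nat \<Rightarrow> nat"
  define C where "C z = (\<Sum>i=1..n. z i * Suc t ^ i)" for z :: "nat \<Rightarrow> nat"
  have mono: "i \<le> n \<Longrightarrow> a 0 \<le> a i" for i
  proof (induction i)
    case 0 then show ?case by simp
  next
    case (Suc i) then show ?case using incr[of i] by simp
  qed
  have apos: "i \<in> {1..n} \<Longrightarrow> 0 < a i" for i using mono[of i] pos by auto
  have bnd: "\<forall>i\<in>{1..n}. z i \<le> t" if "a 0 * x0 + R z = t" for z x0
  proof
    fix i assume i: "i \<in> {1..n}"
    have "z i \<le> a i * z i" using apos[OF i] by simp
    also have "a i * z i \<le> R z" unfolding R_def
      using i by (intro member_le_sum) auto
    finally show "z i \<le> t" using that by linarith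
  qed
  have main: "\<forall>z x0. a 0 * x0 + R z = t \<longrightarrow> R z = r \<longrightarrow> C z = c \<longrightarrow>
      (\<exists>x0' z'. a 0 * x0' + R z' = t \<and> (\<Prod>i=1..n. z' i + 1) \<le> a 0)" for r c
  proof (induction r arbitrary: c rule: less_induct)
    case (less r)
    note outer = less.IH
    show ?case
    proof (induction c rule: less_induct)
      case (less c)
      show ?case
      proof (intro allI impI)
        fix z x0 assume e: "a 0 * x0 + R z = t" and rz: "R z = r" and cz: "C z = c"
        show "\<exists>x0' z'. a 0 * x0' + R z' = t \<and> (\<Prod>i=1..n. z' i + 1) \<le> a 0"
        proof (cases "(\<Prod>i=1..n. z i + 1) \<le> a 0")
          case True then show ?thesis using e by blast
        next
          case False
          then have "a 0 < (\<Prod>i=1..n. z i + 1)" by simp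
          from step[where a=a and z=z and n=n and t=t, OF pos bnd[OF e] this]
          obtain z' where z': "(\<exists>k>0. R z' + a 0 * k = R z) \<or> (R z' = R z \<and> C z' < C z)"
            unfolding R_def C_def by blast
          then show ?thesis
          proof
            assume "\<exists>k>0. R z' + a 0 * k = R z"
            then obtain k where k: "k > 0" "R z' + a 0 * k = R z" by blast
            moreover have "0 < a 0 * k" using k(1) pos by simp
            ultimately have "R z' < r" using rz by linarith
            moreover have "a 0 * (x0 + k) + R z' = t" using e k by (simp add: algebra_simps)
            ultimately have lt: "R z' < r" and e2: "a 0 * (x0 + k) + R z' = t" by blast+
            have "\<forall>z x0. a 0 * x0 + R z = t \<longrightarrow> R z = R z' \<longrightarrow> C z = C z' \<longrightarrow>
              (\<exists>x0' z'. a 0 * x0' + R z' = t \<and> (\<Prod>i=1..n. z' i + 1) \<le> a 0)"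
              by (rule outer[OF lt])
            then show ?thesis using e2 by blast
          next
            assume "R z' = R z \<and> C z' < C z"
            then have "C z' < c" "R z' = r" "a 0 * x0 + R z' = t" using e rz cz by auto
            moreover have "\<forall>z x0. a 0 * x0 + R z = t \<longrightarrow> R z = r \<longrightarrow> C z = C z' \<longrightarrow>
              (\<exists>x0' z'. a 0 * x0' + R z' = t \<and> (\<Prod>i=1..n. z' i + 1) \<le> a 0)"
              by (rule less.IH) fact
            ultimately show ?thesis by blast
          qed
        qed
      qed
    qed
  qed
  obtain x where x: "(\<Sum>i=0..n. a i * x i) = t" using sol by blast
  then have "a 0 * x 0 + R x = t" unfolding R_def split0 .
  then obtain x0' z' where z': "a 0 * x0' + R z' = t" "(\<Prod>i=1..n. z' i + 1) \<le> a 0"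
    using main by blast
  define y where "y = z'(0 := x0')"
  have "R y = R z'" unfolding R_def y_def by (intro sum.cong) auto
  moreover have "(\<Prod>i=1..n. y i + 1) = (\<Prod>i=1..n. z' i + 1)" unfolding y_def by (intro prod.cong) auto
  ultimately have "(\<Sum>i=0..n. a i * y i) = t \<and> (\<Prod>i=1..n. y i + 1) \<le> a 0"
    using z' unfolding split0 R_def by (simp add: y_def)
  then show ?thesis by blast
qed

end
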